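(* Let $k$ be a nonnegative integer such that some fair set $S \in \mathcal{C}$ has $|S| = k$. Define $\tilde{\mathcal{C}}_k = \{S \subseteq V : \text{there exists } S' \in \mathcal{C} \text{ with } |S'| \le k \text{ and } S \subseteq S'\}$. Then $\tilde{\mathcal{C}}_k$ is a matroid, every fair set $S \in \mathcal{C}$ with $|S| = k$ is a base of $\tilde{\mathcal{C}}_k$, and conversely every base of $\tilde{\mathcal{C}}_k$ is a fair set (of size $k$).
   Context: $V$ is a finite ground set partitioned into disjoint color groups $V_1,\dots,V_C$, with integer bounds $0 \le \ell_c \le u_c$ for each $c$. The fair sets are $\mathcal{C} = \{S \subseteq V : \ell_c \le |S \cap V_c| \le u_c\ \forall c \in [C]\}$. A base of a matroid is an inclusion-maximal independent set. *)

theory Defs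
  imports Main
begin

definition matroid :: "'a set \<Rightarrow> 'a set set \<Rightarrow> bool" where
  "matroid E \<I> \<longleftrightarrow>
     finite E \<and> \<I> \<subseteq> Pow E \<and> {} \<in> \<I> \<and>
     (\<forall>A B. A \<in> \<I> \<and> B \<subseteq> A \<longrightarrow> B \<in> \<I>) \<and>
     (\<forall>A B. A \<in> \<I> \<and> B \<in> \<I> \<and> card A < card B \<longrightarrow> (\<exists>x\<in>B - A. insert x A \<in> \<I>))"

definition base :: "'a set set \<Rightarrow> 'a set \<Rightarrow> bool" where
  "base \<I> B \<longleftrightarrow> B \<in> \<I> \<and> (\<forall>A\<in>\<I>. B \<subseteq> A \<longrightarrow> A = B)"

text \<open>Color groups V c for c < C, lower/upper bounds l c, u c.\<close>
definition fair_sets :: "'a set \<Rightarrow> nat \<Rightarrow> (nat \<Rightarrow> 'a set) \<Rightarrow> (nat \<Rightarrow> nat) \<Rightarrow> (nat \<Rightarrow> nat) \<Rightarrow> 'a set set" where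
  "fair_sets V C Vc l u = {S. S \<subseteq> V \<and> (\<forall>c<C. l c \<le> card (S \<inter> Vc c) \<and> card (S \<inter> Vc c) \<le> u c)}"

definition trunc_fair :: "'a set \<Rightarrow> nat \<Rightarrow> (nat \<Rightarrow> 'a set) \<Rightarrow> (nat \<Rightarrow> nat) \<Rightarrow> (nat \<Rightarrow> nat) \<Rightarrow> nat \<Rightarrow> 'a set set" where
  "trunc_fair V C Vc l u k = {S. S \<subseteq> V \<and> (\<exists>S'\<in>fair_sets V C Vc l u. card S' \<le> k \<and> S \<subseteq> S')}"

end

theory Submission
  imports Defs
begin

locale part =
  fixes V :: "'a set" and C :: nat and Vc :: "nat \<Rightarrow> 'a set" and l u :: "nat \<Rightarrow> nat"
  assumes fin: "finite V"
    and sub: "\<And>c. c < C \<Longrightarrow> Vc c \<subseteq> V"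
    and disj: "\<And>c d. c < C \<Longrightarrow> d < C \<Longrightarrow> c \<noteq> d \<Longrightarrow> Vc c \<inter> Vc d = {}"
    and un: "(\<Union>c<C. Vc c) = V"
    and lu: "\<And>c. c < C \<Longrightarrow> l c \<le> u c"
begin

lemma card_part:
  assumes "S \<subseteq> V"
  shows "card S = (\<Sum>c<C. card (S \<inter> Vc c))"
proof -
  have "S = (\<Union>c\<in>{..<C}. S \<inter> Vc c)" using assms un by blast
  hence "card S = card (\<Union>c\<in>{..<C}. S \<inter> Vc c)" by simp
  also have "\<dots> = (\<Sum>c<C. card (S \<inter> Vc c))"
    apply (rule card_UN_disjoint)
    using assms fin disj by (auto intro: finite_subset)
  finally show ?thesis .
qed

lemma count_insert:
  assumes "x \<in> Vc c" "c < C" "x \<notin> A" "A \<subseteq> V" "d < C"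
  shows "card (insert x A \<inter> Vc d) = card (A \<inter> Vc d) + (if d = c then 1 else 0)"
proof (cases "d = c")
  case True
  have "insert x A \<inter> Vc d = insert x (A \<inter> Vc d)" using True assms by auto
  moreover have "finite (A \<inter> Vc d)" using assms fin finite_subset by blast
  ultimately show ?thesis using True assms by simp
next
  case False
  have "x \<notin> Vc d" using disj[OF assms(2) assms(5)] False assms(1) by blast
  hence "insert x A \<inter> Vc d = A \<inter> Vc d" by auto
  thus ?thesis using False by simp
qed

lemma ext_exists:
  assumes "finite X" "A \<subseteq> X" "card A \<le> n" "n \<le> card X"
  shows "\<exists>T. A \<subseteq> T \<and> T \<subseteq> X \<and> card T = n"
proof -
  have "card (X - A) = card X - card A" using assms by (simp add: card_Diff_subset finite_subset)
  hence "n - card A \<le> card (X - A)" using assms by simp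
  then obtain R where R: "R \<subseteq> X - A" "card R = n - card A"
    using obtain_subset_with_card_n by metis
  have fA: "finite A" using assms finite_subset by blast
  have fR: "finite R" using R assms finite_subset by (metis finite_Diff)
  have "card (A \<union> R) = card A + card R" using R fA fR by (subst card_Un_disjoint) auto
  thus ?thesis using R assms by (rule_tac x="A \<union> R" in exI) auto
qed

lemma char:
  assumes lV: "\<And>c. c < C \<Longrightarrow> l c \<le> card (Vc c)"
  shows "S \<in> trunc_fair V C Vc l u k \<longleftrightarrow> S \<subseteq> V \<and> (\<forall>c<C. card (S \<inter> Vc c) \<le> u c)
     \<and> (\<Sum>c<C. max (card (S \<inter> Vc c)) (l c)) \<le> k"
proof
  assume "S \<in> trunc_fair V C Vc l u k"
  then obtain S' where S: "S \<subseteq> V" "S' \<subseteq> V" "\<forall>c<C. l c \<le> card (S' \<inter> Vc c) \<and> card (S' \<inter> Vc c) \<le> u c"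
    "card S' \<le> k" "S \<subseteq> S'"
    unfolding trunc_fair_def fair_sets_def by auto
  have le: "card (S \<inter> Vc c) \<le> card (S' \<inter> Vc c)" for c
    apply (rule card_mono) using S fin by (auto intro: finite_subset)
  have "(\<Sum>c<C. max (card (S \<inter> Vc c)) (l c)) \<le> (\<Sum>c<C. card (S' \<inter> Vc c))"
    apply (rule sum_mono) using le S by auto
  also have "\<dots> = card S'" using card_part S by simp
  finally show "S \<subseteq> V \<and> (\<forall>c<C. card (S \<inter> Vc c) \<le> u c)
     \<and> (\<Sum>c<C. max (card (S \<inter> Vc c)) (l c)) \<le> k" using S le order_trans by blast
next
  assume S: "S \<subseteq> V \<and> (\<forall>c<C. card (S \<inter> Vc c) \<le> u c)
     \<and> (\<Sum>c<C. max (card (S \<inter> Vc c)) (l c)) \<le> k"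
  have "\<forall>c. \<exists>T. c < C \<longrightarrow> (S \<inter> Vc c \<subseteq> T \<and> T \<subseteq> Vc c \<and> card T = max (card (S \<inter> Vc c)) (l c))"
  proof (intro allI)
    fix c
    show "\<exists>T. c < C \<longrightarrow> (S \<inter> Vc c \<subseteq> T \<and> T \<subseteq> Vc c \<and> card T = max (card (S \<inter> Vc c)) (l c))"
    proof (cases "c < C")
      case True
      have f: "finite (Vc c)" using sub[OF True] fin finite_subset by blast
      have "card (S \<inter> Vc c) \<le> card (Vc c)" using f by (simp add: card_mono)
      then show ?thesis using ext_exists[OF f, of "S \<inter> Vc c" "max (card (S \<inter> Vc c)) (l c)"]
        lV[OF True] by auto
    qed simp
  qed
  then obtain T where T: "\<And>c. c < C \<Longrightarrow> S \<inter> Vc c \<subseteq> T c \<and> T c \<subseteq> Vc c \<and> card (T c) = max (card (S \<inter> Vc c)) (l c)"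
    by metis
  define S' where "S' = (\<Union>c<C. T c)"
  have S'V: "S' \<subseteq> V" using T sub unfolding S'_def by blast
  have inter: "S' \<inter> Vc d = T d" if "d < C" for d
  proof
    show "T d \<subseteq> S' \<inter> Vc d" using T that unfolding S'_def by blast
    show "S' \<inter> Vc d \<subseteq> T d"
    proof
      fix x assume "x \<in> S' \<inter> Vc d"
      then obtain c where c: "c < C" "x \<in> T c" "x \<in> Vc d" unfolding S'_def by blast
      have "c = d" using disj[OF c(1) that] T[OF c(1)] c by blast
      thus "x \<in> T d" using c by simp
    qed
  qed
  have fair: "S' \<in> fair_sets V C Vc l u"
    unfolding fair_sets_def using S'V inter T S lu by fastforce
  have "card S' = (\<Sum>c<C. card (S' \<inter> Vc c))" using card_part S'V by simp
  also have "\<dots> = (\<Sum>c<C. max (card (S \<inter> Vc c)) (l c))"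
    apply (rule sum.cong) using inter T by auto
  finally have cS': "card S' \<le> k" using S by simp
  have "S \<subseteq> S'"
  proof
    fix x assume "x \<in> S"
    then obtain c where "c < C" "x \<in> Vc c" using S un by blast
    thus "x \<in> S'" using T \<open>x \<in> S\<close> unfolding S'_def by blast
  qed
  thus "S \<in> trunc_fair V C Vc l u k" unfolding trunc_fair_def using S fair cS' by blast
qed

lemma exch:
  assumes lV: "\<And>c. c < C \<Longrightarrow> l c \<le> card (Vc c)"
    and A: "A \<in> trunc_fair V C Vc l u k" and B: "B \<in> trunc_fair V C Vc l u k"
    and lt: "card A < card B"
  shows "\<exists>x\<in>B - A. insert x A \<in> trunc_fair V C Vc l u k"
proof -
  define a where "a c = card (A \<inter> Vc c)" for c
  define b where "b c = card (B \<inter> Vc c)" for c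
  have Ac: "A \<subseteq> V" "\<forall>c<C. a c \<le> u c" "(\<Sum>c<C. max (a c) (l c)) \<le> k"
    using A char[OF lV] unfolding a_def by auto
  have Bc: "B \<subseteq> V" "\<forall>c<C. b c \<le> u c" "(\<Sum>c<C. max (b c) (l c)) \<le> k"
    using B char[OF lV] unfolding b_def by auto
  have sA: "card A = (\<Sum>c<C. a c)" using card_part Ac unfolding a_def by simp
  have sB: "card B = (\<Sum>c<C. b c)" using card_part Bc unfolding b_def by simp
  have ex: "\<exists>c<C. a c < b c"
  proof (rule ccontr)
    assume "\<not> ?thesis"
    hence "(\<Sum>c<C. b c) \<le> (\<Sum>c<C. a c)" by (intro sum_mono) auto
    thus False using lt sA sB by simp
  qed
  have key: "\<exists>c<C. a c < b c \<and> (a c < l c \<or> (\<Sum>c<C. max (a c) (l c)) < k)"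
  proof (cases "\<exists>c<C. a c < b c \<and> a c < l c")
    case True thus ?thesis by blast
  next
    case False
    have "(\<Sum>c<C. max (a c) (l c) + b c) \<le> (\<Sum>c<C. max (b c) (l c) + a c)"
      apply (rule sum_mono) using False by fastforce
    hence "(\<Sum>c<C. max (a c) (l c)) + (\<Sum>c<C. b c) \<le> (\<Sum>c<C. max (b c) (l c)) + (\<Sum>c<C. a c)"
      by (simp add: sum.distrib)
    hence "(\<Sum>c<C. max (a c) (l c)) < k" using lt sA sB Bc(3) by linarith
    thus ?thesis using ex by blast
  qed
  then obtain c where c: "c < C" "a c < b c" "a c < l c \<or> (\<Sum>c<C. max (a c) (l c)) < k" by blast
  have fA: "finite (A \<inter> Vc c)" using Ac fin by (auto intro: finite_subset)
  have "\<not> B \<inter> Vc c \<subseteq> A \<inter> Vc c"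
  proof
    assume "B \<inter> Vc c \<subseteq> A \<inter> Vc c"
    hence "b c \<le> a c" unfolding a_def b_def using fA by (simp add: card_mono)
    thus False using c by simp
  qed
  then obtain x where x: "x \<in> B" "x \<in> Vc c" "x \<notin> A" by blast
  have cnt: "card (insert x A \<inter> Vc d) = a d + (if d = c then 1 else 0)" if "d < C" for d
    using count_insert[OF x(2) c(1) x(3) Ac(1) that] unfolding a_def .
  have s1: "insert x A \<subseteq> V" using x Ac Bc by auto
  have s2: "\<forall>d<C. card (insert x A \<inter> Vc d) \<le> u d"
    using cnt Ac(2) Bc(2) c by auto
  have s3: "(\<Sum>d<C. max (card (insert x A \<inter> Vc d)) (l d)) \<le> k"
    using c(3)
  proof
    assume h: "a c < l c"
    have "(\<Sum>d<C. max (card (insert x A \<inter> Vc d)) (l d)) \<le> (\<Sum>d<C. max (a d) (l d))"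
      apply (rule sum_mono) using cnt h by auto
    thus ?thesis using Ac(3) by linarith
  next
    assume h: "(\<Sum>c<C. max (a c) (l c)) < k"
    have "(\<Sum>d<C. max (card (insert x A \<inter> Vc d)) (l d)) \<le> (\<Sum>d<C. max (a d) (l d) + (if d = c then 1 else 0))"
      apply (rule sum_mono) using cnt by auto
    also have "\<dots> = (\<Sum>d<C. max (a d) (l d)) + 1" using c(1) by (simp add: sum.distrib)
    finally show ?thesis using h by linarith
  qed
  show ?thesis using s1 s2 s3 char[OF lV] x by blast
qed

end

theorem lemma4p2:
  fixes V :: "'a set" and C :: nat and Vc :: "nat \<Rightarrow> 'a set" and l u :: "nat \<Rightarrow> nat" and k :: nat
  assumes "finite V"
    and "\<And>c. c < C \<Longrightarrow> Vc c \<subseteq> V"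
    and "\<And>c d. c < C \<Longrightarrow> d < C \<Longrightarrow> c \<noteq> d \<Longrightarrow> Vc c \<inter> Vc d = {}"
    and "(\<Union>c<C. Vc c) = V"
    and "\<And>c. c < C \<Longrightarrow> l c \<le> u c"
    and "\<exists>S\<in>fair_sets V C Vc l u. card S = k"
  shows "matroid V (trunc_fair V C Vc l u k)
    \<and> (\<forall>S\<in>fair_sets V C Vc l u. card S = k \<longrightarrow> base (trunc_fair V C Vc l u k) S)
    \<and> (\<forall>B. base (trunc_fair V C Vc l u k) B \<longrightarrow> B \<in> fair_sets V C Vc l u \<and> card B = k)"
proof -
  interpret part V C Vc l u using assms(1-5) by unfold_locales auto
  let ?T = "trunc_fair V C Vc l u k"
  obtain S0 where S0: "S0 \<in> fair_sets V C Vc l u" "card S0 = k" using assms(6) by blast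
  have lV: "l c \<le> card (Vc c)" if "c < C" for c
  proof -
    have "l c \<le> card (S0 \<inter> Vc c)" using S0 that unfolding fair_sets_def by auto
    also have "\<dots> \<le> card (Vc c)" using sub[OF that] fin by (intro card_mono) (auto intro: finite_subset)
    finally show ?thesis .
  qed
  have fairT: "S \<in> ?T" if "S \<in> fair_sets V C Vc l u" "card S \<le> k" for S
    using that unfolding trunc_fair_def fair_sets_def by blast
  have S0T: "S0 \<in> ?T" using fairT S0 by simp
  have M: "matroid V ?T"
    unfolding matroid_def
  proof (intro conjI allI impI)
    show "finite V" by (rule fin)
    show "?T \<subseteq> Pow V" unfolding trunc_fair_def by auto
    show "{} \<in> ?T" using S0T unfolding trunc_fair_def by auto
    show "B \<in> ?T" if "A \<in> ?T \<and> B \<subseteq> A" for A B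
      using that unfolding trunc_fair_def by blast
    show "\<exists>x\<in>B - A. insert x A \<in> ?T" if "A \<in> ?T \<and> B \<in> ?T \<and> card A < card B" for A B
      using exch[OF lV] that by blast
  qed
  have base1: "base ?T S" if "S \<in> fair_sets V C Vc l u" "card S = k" for S
    unfolding base_def
  proof (intro conjI ballI impI)
    show "S \<in> ?T" using fairT that by simp
    fix A assume "A \<in> ?T" "S \<subseteq> A"
    then obtain S' where S': "S' \<in> fair_sets V C Vc l u" "card S' \<le> k" "A \<subseteq> S'"
      unfolding trunc_fair_def by blast
    have fS': "finite S'" using S' fin unfolding fair_sets_def by (auto intro: finite_subset)
    have "S = S'" using card_subset_eq[OF fS', of S] \<open>S \<subseteq> A\<close> S' that
      by (metis card_mono fS' dual_order.trans le_antisym)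
    thus "A = S" using \<open>S \<subseteq> A\<close> S' by blast
  qed
  have base2: "B \<in> fair_sets V C Vc l u \<and> card B = k" if b: "base ?T B" for B
  proof -
    have BT: "B \<in> ?T" and mx: "\<And>A. A \<in> ?T \<Longrightarrow> B \<subseteq> A \<Longrightarrow> A = B" using b unfolding base_def by auto
    then obtain S' where S': "S' \<in> fair_sets V C Vc l u" "card S' \<le> k" "B \<subseteq> S'"
      unfolding trunc_fair_def by blast
    have "S' = B" using mx fairT S' by blast
    hence Bf: "B \<in> fair_sets V C Vc l u" "card B \<le> k" using S' by auto
    have "\<not> card B < k"
    proof
      assume "card B < k"
      then obtain x where "x \<in> S0 - B" "insert x B \<in> ?T" using exch[OF lV BT S0T] S0 by auto
      thus False using mx[of "insert x B"] by auto
    qed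
    thus ?thesis using Bf by simp
  qed
  show ?thesis using M base1 base2 by blast
qed

end
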